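(* Let $G$ be a graph that has a canonical dominating set, let $D_s,D_t$ be dominating sets of $G$, and let $k=\max\{|D_s|,|D_t|\}$. Then $D_s\leftrightarrow_k D_t$ holds if and only if, for every $i\in\{s,t\}$ with $|D_i|=k$, the set $D_i$ is not a minimal dominating set.
   Context: All graphs are finite, simple and undirected. A set $D\subseteq V(G)$ is a dominating set if every vertex of $G$ is in $D$ or adjacent to a vertex of $D$; it is minimal if no proper subset $D\setminus\{w\}$, $w\in D$, is a dominating set. Two dominating sets $D,D'$ of $G$ are adjacent if $|D\triangle D'|=1$. For dominating sets $D_p,D_q$ and an integer $k>0$, write $D_p\leftrightarrow_k D_q$ if there is a sequence $D_0=D_p,D_1,\dots,D_\ell=D_q$ ($\ell\ge 0$) of dominating sets of $G$ with $D_{i-1},D_i$ adjacent for all $i\ge1$ and $|D_i|\le k$ for all $i$. A minimum dominating set $D^*$ of $G$ is called canonical if $D\leftrightarrow_{|D|+1} D^*$ holds for every dominating set $D$ of $G$. *)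

theory Defs
  imports Main
begin

definition graph :: "'a set \<Rightarrow> ('a \<Rightarrow> 'a \<Rightarrow> bool) \<Rightarrow> bool" where
  "graph V E \<longleftrightarrow> finite V \<and> (\<forall>x y. E x y \<longrightarrow> x \<in> V \<and> y \<in> V)
     \<and> (\<forall>x y. E x y \<longrightarrow> E y x) \<and> (\<forall>x. \<not> E x x)"

definition dominating :: "'a set \<Rightarrow> ('a \<Rightarrow> 'a \<Rightarrow> bool) \<Rightarrow> 'a set \<Rightarrow> bool" where
  "dominating V E D \<longleftrightarrow> D \<subseteq> V \<and> (\<forall>v\<in>V. v \<in> D \<or> (\<exists>u\<in>D. E v u))"

definition minimal_dominating :: "'a set \<Rightarrow> ('a \<Rightarrow> 'a \<Rightarrow> bool) \<Rightarrow> 'a set \<Rightarrow> bool" where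
  "minimal_dominating V E D \<longleftrightarrow> dominating V E D \<and> (\<forall>w\<in>D. \<not> dominating V E (D - {w}))"

definition minimum_dominating :: "'a set \<Rightarrow> ('a \<Rightarrow> 'a \<Rightarrow> bool) \<Rightarrow> 'a set \<Rightarrow> bool" where
  "minimum_dominating V E D \<longleftrightarrow> dominating V E D \<and>
     (\<forall>D'. dominating V E D' \<longrightarrow> card D \<le> card D')"

definition ds_adjacent :: "'a set \<Rightarrow> 'a set \<Rightarrow> bool" where
  "ds_adjacent D D' \<longleftrightarrow> card ((D - D') \<union> (D' - D)) = 1"

definition reconf :: "'a set \<Rightarrow> ('a \<Rightarrow> 'a \<Rightarrow> bool) \<Rightarrow> nat \<Rightarrow> 'a set \<Rightarrow> 'a set \<Rightarrow> bool" where
  "reconf V E k Dp Dq \<longleftrightarrow> 0 < k \<and>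
     (\<exists>(f :: nat \<Rightarrow> 'a set) (l :: nat). f 0 = Dp \<and> f l = Dq \<and>
        (\<forall>i\<le>l. dominating V E (f i) \<and> card (f i) \<le> k) \<and>
        (\<forall>i. 1 \<le> i \<and> i \<le> l \<longrightarrow> ds_adjacent (f (i - 1)) (f i)))"

definition canonical_dominating :: "'a set \<Rightarrow> ('a \<Rightarrow> 'a \<Rightarrow> bool) \<Rightarrow> 'a set \<Rightarrow> bool" where
  "canonical_dominating V E Dstar \<longleftrightarrow> minimum_dominating V E Dstar \<and>
     (\<forall>D. dominating V E D \<longrightarrow> reconf V E (card D + 1) D Dstar)"

end

theory Submission
  imports Defs
begin

lemma reconf_refl:
  assumes "dominating V E A" "card A \<le> k" "0 < k"
  shows "reconf V E k A A"
  unfolding reconf_def using assms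
  by (intro conjI exI[of _ "\<lambda>_. A"] exI[of _ 0]) auto

lemma ds_adjacent_sym: "ds_adjacent A B \<Longrightarrow> ds_adjacent B A"
  unfolding ds_adjacent_def by (simp add: Un_commute)

lemma reconf_mono:
  assumes "reconf V E k A B" "k \<le> k'"
  shows "reconf V E k' A B"
proof -
  from assms(1) obtain f :: "nat \<Rightarrow> _" and l where k: "0 < k" and f: "f 0 = A" "f l = B"
    "\<forall>i\<le>l. dominating V E (f i) \<and> card (f i) \<le> k"
    "\<forall>i. 1 \<le> i \<and> i \<le> l \<longrightarrow> ds_adjacent (f (i - 1)) (f i)"
    unfolding reconf_def by blast
  show ?thesis unfolding reconf_def using k f assms(2)
    by (intro conjI exI[of _ f] exI[of _ l]) auto
qed

lemma reconf_sym:
  assumes "reconf V E k A B"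
  shows "reconf V E k B A"
proof -
  from assms obtain f :: "nat \<Rightarrow> _" and l where k: "0 < k" and f: "f 0 = A" "f l = B"
    "\<forall>i\<le>l. dominating V E (f i) \<and> card (f i) \<le> k"
    "\<forall>i. 1 \<le> i \<and> i \<le> l \<longrightarrow> ds_adjacent (f (i - 1)) (f i)"
    unfolding reconf_def by blast
  define g where "g i = f (l - i)" for i
  have "\<forall>i. 1 \<le> i \<and> i \<le> l \<longrightarrow> ds_adjacent (g (i - 1)) (g i)"
  proof (intro allI impI)
    fix i assume i: "1 \<le> i \<and> i \<le> l"
    have "1 \<le> l - i + 1 \<and> l - i + 1 \<le> l" using i by arith
    from f(4)[rule_format, OF this]
    have "ds_adjacent (f (l - i + 1 - 1)) (f (l - i + 1))" .
    moreover have "l - i + 1 = l - (i - 1)" using i by arith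
    ultimately show "ds_adjacent (g (i - 1)) (g i)"
      unfolding g_def by (simp add: ds_adjacent_sym)
  qed
  moreover have "\<forall>i\<le>l. dominating V E (g i) \<and> card (g i) \<le> k"
    using f(3) unfolding g_def by simp
  moreover have "g 0 = B" "g l = A" using f by (simp_all add: g_def)
  ultimately show ?thesis unfolding reconf_def using k
    by (intro conjI exI[of _ g] exI[of _ l]) simp_all
qed

lemma reconf_trans:
  assumes "reconf V E k A B" "reconf V E k B C"
  shows "reconf V E k A C"
proof -
  from assms(1) obtain f :: "nat \<Rightarrow> _" and l where k: "0 < k" and f: "f 0 = A" "f l = B"
    "\<forall>i\<le>l. dominating V E (f i) \<and> card (f i) \<le> k"
    "\<forall>i. 1 \<le> i \<and> i \<le> l \<longrightarrow> ds_adjacent (f (i - 1)) (f i)"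
    unfolding reconf_def by blast
  from assms(2) obtain g :: "nat \<Rightarrow> _" and m where g: "g 0 = B" "g m = C"
    "\<forall>i\<le>m. dominating V E (g i) \<and> card (g i) \<le> k"
    "\<forall>i. 1 \<le> i \<and> i \<le> m \<longrightarrow> ds_adjacent (g (i - 1)) (g i)"
    unfolding reconf_def by blast
  define h where "h i = (if i \<le> l then f i else g (i - l))" for i
  have "\<forall>i. 1 \<le> i \<and> i \<le> l + m \<longrightarrow> ds_adjacent (h (i - 1)) (h i)"
  proof (intro allI impI)
    fix i assume i: "1 \<le> i \<and> i \<le> l + m"
    show "ds_adjacent (h (i - 1)) (h i)"
    proof (cases "i \<le> l")
      case True
      then have "h (i - 1) = f (i - 1)" "h i = f i" by (auto simp: h_def)
      thus ?thesis using f(4) i True by simp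
    next
      case False
      then have "i - 1 - l = i - l - 1" by simp
      moreover have "h (i - 1) = g (i - l - 1)"
      proof (cases "i - 1 \<le> l")
        case True
        then have "i - 1 = l" "i - l - 1 = 0" using False by auto
        then show ?thesis using f(2) g(1) by (simp add: h_def)
      next
        case False
        then show ?thesis by (simp add: h_def)
      qed
      moreover have "1 \<le> i - l \<and> i - l \<le> m" using False i by arith
      moreover have "h i = g (i - l)" using False by (simp add: h_def)
      ultimately show ?thesis using g(4)[rule_format, of "i - l"] by simp
    qed
  qed
  moreover have "\<forall>i\<le>l+m. dominating V E (h i) \<and> card (h i) \<le> k"
    using f(3) g(3) by (auto simp: h_def)
  moreover have "h (l + m) = C"
    using g f by (cases m) (auto simp: h_def)
  ultimately show ?thesis unfolding reconf_def using k f
    by (intro conjI exI[of _ h] exI[of _ "l + m"]) (auto simp: h_def)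
qed

lemma reconf_step:
  assumes "ds_adjacent A B" "dominating V E A" "dominating V E B"
    "card A \<le> k" "card B \<le> k" "0 < k"
  shows "reconf V E k A B"
  unfolding reconf_def using assms
  by (intro conjI exI[of _ "\<lambda>i. if i = 0 then A else B"] exI[of _ 1]) auto

lemma first_step:
  assumes "reconf V E k A B" "A \<noteq> B"
  shows "\<exists>C. dominating V E C \<and> card C \<le> k \<and> ds_adjacent A C"
proof -
  from assms(1) obtain f :: "nat \<Rightarrow> _" and l where f: "f 0 = A" "f l = B"
    "\<forall>i\<le>l. dominating V E (f i) \<and> card (f i) \<le> k"
    "\<forall>i. 1 \<le> i \<and> i \<le> l \<longrightarrow> ds_adjacent (f (i - 1)) (f i)"
    unfolding reconf_def by blast
  have "l \<ge> 1" using f assms(2) by (cases l) auto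
  then have "dominating V E (f 1) \<and> card (f 1) \<le> k" using f(3) by blast
  moreover have "ds_adjacent (f (1 - 1)) (f 1)" using f(4) \<open>l \<ge> 1\<close> by blast
  then have "ds_adjacent A (f 1)" using f(1) by simp
  ultimately show ?thesis by blast
qed

lemma adj_cases:
  assumes "ds_adjacent A C"
  shows "\<exists>x. (x \<in> A \<and> C = A - {x}) \<or> (x \<notin> A \<and> C = insert x A)"
proof -
  have h: "card ((A - C) \<union> (C - A)) = Suc 0" using assms unfolding ds_adjacent_def by simp
  then obtain x where x: "(A - C) \<union> (C - A) = {x}" unfolding card_1_singleton_iff by blast
  have m[rule_format]: "\<forall>y. ((y \<in> A \<and> y \<notin> C) \<or> (y \<in> C \<and> y \<notin> A)) \<longleftrightarrow> y = x"
    using x by (simp add: set_eq_iff) 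
  show ?thesis
  proof (cases "x \<in> A")
    case True
    have "C = A - {x}"
    proof (rule set_eqI)
      fix y show "y \<in> C \<longleftrightarrow> y \<in> A - {x}" using m[of y] m[of x] True by blast
    qed
    thus ?thesis using True by (intro exI[of _ x]) simp
  next
    case False
    have "C = insert x A"
    proof (rule set_eqI)
      fix y show "y \<in> C \<longleftrightarrow> y \<in> insert x A" using m[of y] m[of x] False by blast
    qed
    thus ?thesis using False by (intro exI[of _ x]) simp
  qed
qed

lemma no_move:
  assumes "graph V E" "reconf V E k A B" "A \<noteq> B" "card A = k"
    "minimal_dominating V E A"
  shows False
proof -
  obtain C where C: "dominating V E C" "card C \<le> k" "ds_adjacent A C"
    using first_step[OF assms(2,3)] by blast
  have fin: "finite A" using assms(1,5) unfolding graph_def minimal_dominating_def dominating_def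
    by (meson finite_subset)
  from adj_cases[OF C(3)] obtain x where
    "(x \<in> A \<and> C = A - {x}) \<or> (x \<notin> A \<and> C = insert x A)" by blast
  then show False
  proof
    assume "x \<in> A \<and> C = A - {x}"
    thus False using assms(5) C(1) unfolding minimal_dominating_def by blast
  next
    assume "x \<notin> A \<and> C = insert x A"
    thus False using C(2) assms(4) fin by simp
  qed
qed

lemma to_star:
  assumes "graph V E" "canonical_dominating V E S" "dominating V E A"
    "card A \<le> k" "0 < k"
    "card A = k \<longrightarrow> \<not> minimal_dominating V E A"
  shows "reconf V E k A S"
proof (cases "card A < k")
  case True
  have "reconf V E (card A + 1) A S" using assms(2,3) unfolding canonical_dominating_def by blast
  moreover have "card A + 1 \<le> k" using True by simp
  ultimately show ?thesis by (rule reconf_mono)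
next
  case False
  then have "card A = k" using assms(4) by simp
  then obtain w where w: "w \<in> A" "dominating V E (A - {w})"
    using assms(3,6) unfolding minimal_dominating_def by blast
  have fin: "finite A" using assms(1,3) unfolding graph_def dominating_def
    by (meson finite_subset)
  have cw: "card (A - {w}) + 1 = k" using w fin \<open>card A = k\<close> assms(5)
    by (simp add: card_Diff_singleton)
  have "reconf V E k (A - {w}) S"
    using assms(2) w(2) cw unfolding canonical_dominating_def by metis
  moreover have "reconf V E k A (A - {w})"
  proof (rule reconf_step)
    have "(A - (A - {w})) \<union> ((A - {w}) - A) = {w}" using w by blast
    then show "ds_adjacent A (A - {w})" unfolding ds_adjacent_def by simp
  qed (use w assms cw in auto)
  ultimately show ?thesis by (rule reconf_trans[rotated])
qed

theorem lemma2:
  fixes V :: "'a set" and E :: "'a \<Rightarrow> 'a \<Rightarrow> bool" and Ds Dt :: "'a set"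
  assumes "graph V E"
    and "\<exists>Dstar. canonical_dominating V E Dstar"
    and "dominating V E Ds" and "dominating V E Dt"
    and "Ds \<noteq> Dt"
  shows "reconf V E (max (card Ds) (card Dt)) Ds Dt \<longleftrightarrow>
    ((card Ds = max (card Ds) (card Dt) \<longrightarrow> \<not> minimal_dominating V E Ds) \<and>
     (card Dt = max (card Ds) (card Dt) \<longrightarrow> \<not> minimal_dominating V E Dt))"
proof
  assume r: "reconf V E (max (card Ds) (card Dt)) Ds Dt"
  show "((card Ds = max (card Ds) (card Dt) \<longrightarrow> \<not> minimal_dominating V E Ds) \<and>
     (card Dt = max (card Ds) (card Dt) \<longrightarrow> \<not> minimal_dominating V E Dt))"
  proof (intro conjI impI notI)
    assume "card Ds = max (card Ds) (card Dt)" "minimal_dominating V E Ds"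
    then show False using no_move[OF assms(1) r assms(5)] by blast
  next
    assume "card Dt = max (card Ds) (card Dt)" "minimal_dominating V E Dt"
    moreover have "Dt \<noteq> Ds" using assms(5) by blast
    ultimately show False using no_move[OF assms(1) reconf_sym[OF r]] by blast
  qed
next
  assume h: "((card Ds = max (card Ds) (card Dt) \<longrightarrow> \<not> minimal_dominating V E Ds) \<and>
     (card Dt = max (card Ds) (card Dt) \<longrightarrow> \<not> minimal_dominating V E Dt))"
  obtain S where S: "canonical_dominating V E S" using assms(2) by blast
  have fin: "finite Ds" "finite Dt" using assms(1,3,4) unfolding graph_def dominating_def
    by (meson finite_subset)+
  have "0 < max (card Ds) (card Dt)"
  proof (rule ccontr)
    assume "\<not> ?thesis"
    then have "Ds = {}" "Dt = {}" using fin by auto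
    thus False using assms(5) by simp
  qed
  then have "reconf V E (max (card Ds) (card Dt)) Ds S"
    "reconf V E (max (card Ds) (card Dt)) Dt S"
    using to_star[OF assms(1) S assms(3)] to_star[OF assms(1) S assms(4)] h by auto
  thus "reconf V E (max (card Ds) (card Dt)) Ds Dt"
    by (rule reconf_trans[OF _ reconf_sym])
qed

end
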